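(* Let $n=3$. For a $3\times3$ signature matrix $\varepsilon$, an $\varepsilon$-$\mathrm{SL}_2$-tiling of $\mathbb{Z}^3$ exists if and only if $\varepsilon_{12}\varepsilon_{13}\varepsilon_{23}=-1$; in particular there are exactly $4$ signature matrices $\varepsilon$ for which an $\varepsilon$-$\mathrm{SL}_2$-tiling of $\mathbb{Z}^3$ exists. For each such $\varepsilon$ the $\varepsilon$-$\mathrm{SL}_2$-tiling is unique up to translation, i.e. any two $\varepsilon$-$\mathrm{SL}_2$-tilings $(a_{\mathbf{i}})$, $(b_{\mathbf{i}})$ satisfy $b_{\mathbf{i}}=a_{\mathbf{i}+\mathbf{t}}$ for all $\mathbf{i}$ for some fixed $\mathbf{t}\in\mathbb{Z}^3$.
   Context: Write $\mathbf{i}=(i_1,\dots,i_n)\in\mathbb{Z}^n$ and $\mathbf{e}_k$ for the $k$-th standard unit vector. A signature matrix is a symmetric $n\times n$ matrix $\varepsilon=(\varepsilon_{k\ell})$ with $\varepsilon_{k\ell}\in\{1,-1\}$ for $k\ne\ell$ and $\varepsilon_{kk}=-1$. Given a signature matrix $\varepsilon$, an array $(a_{\mathbf{i}})_{\mathbf{i}\in\mathbb{Z}^n}$ with all $a_{\mathbf{i}}\in\mathbb{Z}_{>0}$ is an $\varepsilon$-$\mathrm{SL}_2$-tiling of $\mathbb{Z}^n$ if for all $\mathbf{i}\in\mathbb{Z}^n$ and all $k\ne\ell$: $a_{\mathbf{i}+\mathbf{e}_\ell}a_{\mathbf{i}+\mathbf{e}_k}-a_{\mathbf{i}}a_{\mathbf{i}+\mathbf{e}_k+\mathbf{e}_\ell}=\varepsilon_{k\ell}$.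 *)

theory Defs
  imports Main
begin

type_synonym pt3 = "int \<times> int \<times> int"

definition unitv :: "nat \<Rightarrow> pt3" where
  "unitv k = (if k = 1 then (1,0,0) else if k = 2 then (0,1,0) else (0,0,1))"

definition padd :: "pt3 \<Rightarrow> pt3 \<Rightarrow> pt3" where
  "padd x y = (fst x + fst y, fst (snd x) + fst (snd y), snd (snd x) + snd (snd y))"

text \<open>A 3x3 signature matrix, represented as a function on indices {1,2,3}
  (and zero outside, so that distinct functions are distinct matrices).\<close>
definition signature3 :: "(nat \<Rightarrow> nat \<Rightarrow> int) \<Rightarrow> bool" where
  "signature3 eps \<longleftrightarrow>
     (\<forall>k l. eps k l = eps l k) \<and>
     (\<forall>k \<in> {1,2,3}. eps k k = -1) \<and>
     (\<forall>k \<in> {1,2,3}. \<forall>l \<in> {1,2,3}. k \<noteq> l \<longrightarrow> eps k l \<in> {1, -1}) \<and>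
     (\<forall>k l. k \<notin> {1,2,3} \<or> l \<notin> {1,2,3} \<longrightarrow> eps k l = 0)"

definition sl2_tiling3 :: "(nat \<Rightarrow> nat \<Rightarrow> int) \<Rightarrow> (pt3 \<Rightarrow> int) \<Rightarrow> bool" where
  "sl2_tiling3 eps a \<longleftrightarrow>
     (\<forall>i. a i > 0) \<and>
     (\<forall>i. \<forall>k \<in> {1,2,3}. \<forall>l \<in> {1,2,3}. k \<noteq> l \<longrightarrow>
        a (padd i (unitv l)) * a (padd i (unitv k))
          - a i * a (padd (padd i (unitv k)) (unitv l)) = eps k l)"

end

theory Submission
  imports Defs
begin


lemma cube:
  fixes x y z w p q r d ea eb :: int
  assumes h1: "w*y - x*q = ea" and h2: "w*z - x*r = eb" and h3: "q*p - y*d = eb" and h4: "r*p - z*d = ea"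
  shows "p*(y*eb - z*ea) = x*(z*eb - y*ea)"
proof -
  have a1: "q*p - eb = y*d" "r*p - z*d = ea" using h3 h4 by auto
  have a2: "r*p - ea = z*d" using h4 by auto
  have 2: "z*(q*p - eb) = y*(r*p - ea)" unfolding a1(1) a2 by simp
  have 3: "x*q = w*y - ea" "x*r = w*z - eb" using h1 h2 by auto
  from 2 have "x*(z*(q*p - eb)) = x*(y*(r*p - ea))" by simp
  then have "z*p*(x*q) - x*z*eb = y*p*(x*r) - x*y*ea" by (simp add: algebra_simps)
  then have "z*p*(w*y - ea) - x*z*eb = y*p*(w*z - eb) - x*y*ea" using 3 by simp
  then show ?thesis by (simp add: algebra_simps)
qed

lemma cube_eq:
  fixes x y z w p q r d ea eb :: int
  assumes "w*y - x*q = ea" "w*z - x*r = eb" "q*p - y*d = eb" "r*p - z*d = ea"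
    "ea \<noteq> 0" "x > 0" "p > 0" "ea = eb"
  shows "y = z"
proof -
  have "p*(y*ea - z*ea) = x*(z*ea - y*ea)" using cube[OF assms(1-4)] assms(8) by simp
  then have "(p + x) * (y - z) * ea = 0" by (simp add: algebra_simps)
  moreover have "p + x \<noteq> 0" using assms by simp
  ultimately show ?thesis using assms(5) by simp
qed

lemma cube_diag:
  fixes x y z w p q r d ea eb :: int
  assumes "w*y - x*q = ea" "w*z - x*r = eb" "q*p - y*d = eb" "r*p - z*d = ea"
    "ea \<noteq> 0" "y > 0" "z > 0" "eb = - ea"
  shows "p = x"
proof -
  have "p*(- y*ea - z*ea) = x*(- z*ea - y*ea)" using cube[OF assms(1-4)] assms(8) by simp
  then have "(p - x) * (y + z) * ea = 0" by (simp add: algebra_simps)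
  moreover have "y + z \<noteq> 0" using assms by simp
  ultimately show ?thesis using assms(5) by simp
qed

lemma tilingE:
  assumes "sl2_tiling3 eps a"
  shows tE12: "a (x+1,y,z) * a (x,y+1,z) - a (x,y,z) * a (x+1,y+1,z) = eps 1 2"
    and tE13: "a (x+1,y,z) * a (x,y,z+1) - a (x,y,z) * a (x+1,y,z+1) = eps 1 3"
    and tE23: "a (x,y+1,z) * a (x,y,z+1) - a (x,y,z) * a (x,y+1,z+1) = eps 2 3"
    and tpos: "a i > 0"
proof -
  have T: "\<And>i k l. k \<in> {1,2,3} \<Longrightarrow> l \<in> {1,2,3} \<Longrightarrow> k \<noteq> l \<Longrightarrow>
        a (padd i (unitv l)) * a (padd i (unitv k))
          - a i * a (padd (padd i (unitv k)) (unitv l)) = eps k l"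
    using assms unfolding sl2_tiling3_def by blast
  show "a (x+1,y,z) * a (x,y+1,z) - a (x,y,z) * a (x+1,y+1,z) = eps 1 2"
    using T[of 1 2 "(x,y,z)"] by (simp add: padd_def unitv_def mult.commute)
  show "a (x+1,y,z) * a (x,y,z+1) - a (x,y,z) * a (x+1,y,z+1) = eps 1 3"
    using T[of 1 3 "(x,y,z)"] by (simp add: padd_def unitv_def mult.commute)
  show "a (x,y+1,z) * a (x,y,z+1) - a (x,y,z) * a (x,y+1,z+1) = eps 2 3"
    using T[of 2 3 "(x,y,z)"] by (simp add: padd_def unitv_def mult.commute)
  show "a i > 0" using assms unfolding sl2_tiling3_def by blast
qed

lemma sigE:
  assumes "signature3 eps"
  shows "eps 2 1 = eps 1 2" "eps 3 1 = eps 1 3" "eps 3 2 = eps 2 3"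
    "eps 1 2 \<in> {1,-1}" "eps 1 3 \<in> {1,-1}" "eps 2 3 \<in> {1,-1}"
  using assms unfolding signature3_def by auto



lemma rule12_eq:
  assumes S: "signature3 eps" and T: "sl2_tiling3 eps a" and e: "eps 2 3 = eps 1 3"
  shows "a (x+1,y,z) = a (x,y+1,z)"
proof (rule cube_eq[where ea="eps 1 3" and eb="eps 2 3"])
  show "a (x,y,z+1) * a (x+1,y,z) - a (x,y,z) * a (x+1,y,z+1) = eps 1 3"
    using tE13[OF T, of x y z] by (simp add: ac_simps)
  show "a (x,y,z+1) * a (x,y+1,z) - a (x,y,z) * a (x,y+1,z+1) = eps 2 3"
    using tE23[OF T, of x y z] by (simp add: ac_simps)
  show "a (x+1,y,z+1) * a (x+1,y+1,z) - a (x+1,y,z) * a (x+1,y+1,z+1) = eps 2 3"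
    using tE23[OF T, of "x+1" y z] by (simp add: ac_simps)
  show "a (x,y+1,z+1) * a (x+1,y+1,z) - a (x,y+1,z) * a (x+1,y+1,z+1) = eps 1 3"
    using tE13[OF T, of x "y+1" z] by (simp add: ac_simps)
  show "eps 1 3 \<noteq> 0" using sigE(5)[OF S] by auto
qed (use tpos[OF T] e in auto)

lemma rule12_diag:
  assumes S: "signature3 eps" and T: "sl2_tiling3 eps a" and e: "eps 2 3 = - eps 1 3"
  shows "a (x+1,y+1,z) = a (x,y,z)"
proof (rule cube_diag[where ea="eps 1 3" and eb="eps 2 3"])
  show "a (x,y,z+1) * a (x+1,y,z) - a (x,y,z) * a (x+1,y,z+1) = eps 1 3"
    using tE13[OF T, of x y z] by (simp add: ac_simps)
  show "a (x,y,z+1) * a (x,y+1,z) - a (x,y,z) * a (x,y+1,z+1) = eps 2 3"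
    using tE23[OF T, of x y z] by (simp add: ac_simps)
  show "a (x+1,y,z+1) * a (x+1,y+1,z) - a (x+1,y,z) * a (x+1,y+1,z+1) = eps 2 3"
    using tE23[OF T, of "x+1" y z] by (simp add: ac_simps)
  show "a (x,y+1,z+1) * a (x+1,y+1,z) - a (x,y+1,z) * a (x+1,y+1,z+1) = eps 1 3"
    using tE13[OF T, of x "y+1" z] by (simp add: ac_simps)
  show "eps 1 3 \<noteq> 0" using sigE(5)[OF S] by auto
qed (use tpos[OF T] e in auto)

lemma rule13_eq:
  assumes S: "signature3 eps" and T: "sl2_tiling3 eps a" and e: "eps 1 2 = eps 2 3"
  shows "a (x+1,y,z) = a (x,y,z+1)"
proof (rule cube_eq[where ea="eps 1 2" and eb="eps 2 3"])
  show "a (x,y+1,z) * a (x+1,y,z) - a (x,y,z) * a (x+1,y+1,z) = eps 1 2"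
    using tE12[OF T, of x y z] by (simp add: ac_simps)
  show "a (x,y+1,z) * a (x,y,z+1) - a (x,y,z) * a (x,y+1,z+1) = eps 2 3"
    using tE23[OF T, of x y z] by (simp add: ac_simps)
  show "a (x+1,y+1,z) * a (x+1,y,z+1) - a (x+1,y,z) * a (x+1,y+1,z+1) = eps 2 3"
    using tE23[OF T, of "x+1" y z] by (simp add: ac_simps)
  show "a (x,y+1,z+1) * a (x+1,y,z+1) - a (x,y,z+1) * a (x+1,y+1,z+1) = eps 1 2"
    using tE12[OF T, of x y "z+1"] by (simp add: ac_simps)
  show "eps 1 2 \<noteq> 0" using sigE(4)[OF S] by auto
qed (use tpos[OF T] e in auto)

lemma rule13_diag:
  assumes S: "signature3 eps" and T: "sl2_tiling3 eps a" and e: "eps 2 3 = - eps 1 2"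
  shows "a (x+1,y,z+1) = a (x,y,z)"
proof (rule cube_diag[where ea="eps 1 2" and eb="eps 2 3"])
  show "a (x,y+1,z) * a (x+1,y,z) - a (x,y,z) * a (x+1,y+1,z) = eps 1 2"
    using tE12[OF T, of x y z] by (simp add: ac_simps)
  show "a (x,y+1,z) * a (x,y,z+1) - a (x,y,z) * a (x,y+1,z+1) = eps 2 3"
    using tE23[OF T, of x y z] by (simp add: ac_simps)
  show "a (x+1,y+1,z) * a (x+1,y,z+1) - a (x+1,y,z) * a (x+1,y+1,z+1) = eps 2 3"
    using tE23[OF T, of "x+1" y z] by (simp add: ac_simps)
  show "a (x,y+1,z+1) * a (x+1,y,z+1) - a (x,y,z+1) * a (x+1,y+1,z+1) = eps 1 2"
    using tE12[OF T, of x y "z+1"] by (simp add: ac_simps)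
  show "eps 1 2 \<noteq> 0" using sigE(4)[OF S] by auto
qed (use tpos[OF T] e in auto)

lemma rule23_eq:
  assumes S: "signature3 eps" and T: "sl2_tiling3 eps a" and e: "eps 1 2 = eps 1 3"
  shows "a (x,y+1,z) = a (x,y,z+1)"
proof (rule cube_eq[where ea="eps 1 2" and eb="eps 1 3"])
  show "a (x+1,y,z) * a (x,y+1,z) - a (x,y,z) * a (x+1,y+1,z) = eps 1 2"
    using tE12[OF T, of x y z] by (simp add: ac_simps)
  show "a (x+1,y,z) * a (x,y,z+1) - a (x,y,z) * a (x+1,y,z+1) = eps 1 3"
    using tE13[OF T, of x y z] by (simp add: ac_simps)
  show "a (x+1,y+1,z) * a (x,y+1,z+1) - a (x,y+1,z) * a (x+1,y+1,z+1) = eps 1 3"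
    using tE13[OF T, of x "y+1" z] by (simp add: ac_simps)
  show "a (x+1,y,z+1) * a (x,y+1,z+1) - a (x,y,z+1) * a (x+1,y+1,z+1) = eps 1 2"
    using tE12[OF T, of x y "z+1"] by (simp add: ac_simps)
  show "eps 1 2 \<noteq> 0" using sigE(4)[OF S] by auto
qed (use tpos[OF T] e in auto)



lemma exists_min:
  fixes a :: "'a \<Rightarrow> int"
  assumes "\<And>i. a i > 0"
  obtains p where "\<And>i. a p \<le> a i"
proof -
  obtain p where "\<forall>y. nat (a p) \<le> nat (a y)"
    using ex_has_least_nat[of "\<lambda>_. True" undefined "\<lambda>i. nat (a i)"] by auto
  then have "\<And>i. a p \<le> a i" using assms by (metis nat_le_eq_zle)
  then show ?thesis using that by blast
qed

lemma minarg:
  fixes u v w :: int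
  assumes "u > 0" "u \<le> v" "u \<le> w" "u*u - v*w = 1"
  shows False
proof -
  have "u*u \<le> v*w" using assms by (simp add: mult_mono)
  then show False using assms by simp
qed

lemma no_tiling:
  assumes S: "signature3 eps" and T: "sl2_tiling3 eps a"
  shows "eps 1 2 * eps 1 3 * eps 2 3 = -1"
proof (rule ccontr)
  assume ne: "eps 1 2 * eps 1 3 * eps 2 3 \<noteq> -1"
  obtain p where pm: "\<And>i. a p \<le> a i" using exists_min[of a] tpos[OF T] by blast
  obtain X Y Z where pXYZ: "p = (X,Y,Z)" by (cases p) auto
  have pos: "a p > 0" using tpos[OF T] by blast
  have "(eps 1 2 = 1 \<and> eps 2 3 = eps 1 3) \<or> (eps 1 3 = 1 \<and> eps 1 2 = eps 2 3)
        \<or> (eps 2 3 = 1 \<and> eps 1 2 = eps 1 3)"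
    using sigE(4-6)[OF S] ne by auto
  then show False
  proof (elim disjE conjE)
    assume e: "eps 1 2 = 1" "eps 2 3 = eps 1 3"
    have r: "a (X,Y,Z) = a (X-1,Y+1,Z)" using rule12_eq[OF S T e(2), of "X-1" Y Z] by simp
    have t: "a (X,Y,Z) * a (X-1,Y+1,Z) - a (X-1,Y,Z) * a (X,Y+1,Z) = 1"
      using tE12[OF T, of "X-1" Y Z] e(1) by simp
    show False using minarg[of "a p" "a (X-1,Y,Z)" "a (X,Y+1,Z)"] pm pos t r pXYZ by metis
  next
    assume e: "eps 1 3 = 1" "eps 1 2 = eps 2 3"
    have r: "a (X,Y,Z) = a (X-1,Y,Z+1)" using rule13_eq[OF S T e(2), of "X-1" Y Z] by simp
    have t: "a (X,Y,Z) * a (X-1,Y,Z+1) - a (X-1,Y,Z) * a (X,Y,Z+1) = 1"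
      using tE13[OF T, of "X-1" Y Z] e(1) by simp
    show False using minarg[of "a p" "a (X-1,Y,Z)" "a (X,Y,Z+1)"] pm pos t r pXYZ by metis
  next
    assume e: "eps 2 3 = 1" "eps 1 2 = eps 1 3"
    have r: "a (X,Y,Z) = a (X,Y-1,Z+1)" using rule23_eq[OF S T e(2), of X "Y-1" Z] by simp
    have t: "a (X,Y,Z) * a (X,Y-1,Z+1) - a (X,Y-1,Z) * a (X,Y,Z+1) = 1"
      using tE23[OF T, of X "Y-1" Z] e(1) by simp
    show False using minarg[of "a p" "a (X,Y-1,Z)" "a (X,Y,Z+1)"] pm pos t r pXYZ by metis
  qed
qed

lemma shift_rep:
  fixes g :: "int \<Rightarrow> int \<Rightarrow> int"
  assumes st: "\<And>x y. g x (y+1) = g (x+s) y"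
  shows "g x y = g (x + s*y) 0"
proof -
  have "\<forall>x. g x y = g (x + s*y) 0"
  proof (induct y rule: int_induct[where k=0])
    case base then show ?case by simp
  next
    case (step1 i)
    show ?case
    proof
      fix x
      have "g x (i+1) = g (x+s) i" by (rule st)
      also have "\<dots> = g (x + s + s*i) 0" using step1 by simp
      finally show "g x (i+1) = g (x + s*(i+1)) 0" by (simp add: algebra_simps)
    qed
  next
    case (step2 i)
    show ?case
    proof
      fix x
      have "g (x - s) (i - 1 + 1) = g (x - s + s) (i - 1)" by (rule st)
      then have "g x (i - 1) = g (x - s) i" by simp
      also have "\<dots> = g (x - s + s*i) 0" using step2 by simp
      finally show "g x (i - 1) = g (x + s*(i - 1)) 0" by (simp add: algebra_simps)
    qed
  qed
  then show ?thesis by blast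
qed

lemma rep:
  assumes S: "signature3 eps" and T: "sl2_tiling3 eps a"
    and P: "eps 1 2 * eps 1 3 * eps 2 3 = -1"
  shows "a (x,y,z) = a (x - eps 1 2 * y - eps 1 3 * z, 0, 0)"
proof -
  have v: "eps 1 2 \<in> {1,-1}" "eps 1 3 \<in> {1,-1}" "eps 2 3 \<in> {1,-1}" using sigE[OF S] by auto
  have st2: "\<And>x y z. a (x,y+1,z) = a (x + (- eps 1 2), y, z)"
  proof -
    fix x y z
    show "a (x,y+1,z) = a (x + (- eps 1 2), y, z)"
    proof (cases "eps 1 2 = -1")
      case True
      then have "eps 2 3 = eps 1 3" using v P by auto
      from rule12_eq[OF S T this, of x y z] True show ?thesis by simp
    next
      case False
      then have "eps 1 2 = 1" "eps 2 3 = - eps 1 3" using v P by auto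
      with rule12_diag[OF S T this(2), of "x-1" y z] show ?thesis by simp
    qed
  qed
  have st3: "\<And>x y z. a (x,y,z+1) = a (x + (- eps 1 3), y, z)"
  proof -
    fix x y z
    show "a (x,y,z+1) = a (x + (- eps 1 3), y, z)"
    proof (cases "eps 1 3 = -1")
      case True
      then have "eps 1 2 = eps 2 3" using v P by auto
      from rule13_eq[OF S T this, of x y z] True show ?thesis by simp
    next
      case False
      then have "eps 1 3 = 1" "eps 2 3 = - eps 1 2" using v P by auto
      with rule13_diag[OF S T this(2), of "x-1" y z] show ?thesis by simp
    qed
  qed
  have "a (x,y,z) = a (x + (- eps 1 2) * y, 0, z)"
    using shift_rep[of "\<lambda>x y. a (x,y,z)" "- eps 1 2" x y] st2 by blast
  also have "\<dots> = a (x + (- eps 1 2) * y + (- eps 1 3) * z, 0, 0)"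
    using shift_rep[of "\<lambda>x z. a (x,0,z)" "- eps 1 3" "x + (- eps 1 2) * y" z] st3 by blast
  finally show ?thesis by (simp add: algebra_simps)
qed

lemma line_rec:
  assumes S: "signature3 eps" and T: "sl2_tiling3 eps a"
    and P: "eps 1 2 * eps 1 3 * eps 2 3 = -1"
  shows "a (s,0,0) * a (s+2,0,0) = (a (s+1,0,0))^2 + 1"
proof (cases "eps 1 2 = -1")
  case True
  have t: "a (s+1,0,0) * a (s,0+1,0) - a (s,0,0) * a (s+1,0+1,0) = eps 1 2"
    by (rule tE12[OF T])
  have r1: "a (s,0+1,0) = a (s+1,0,0)" using rep[OF S T P, of s 1 0] True by simp
  have r2: "a (s+1,0+1,0) = a (s+2,0,0)" using rep[OF S T P, of "s+1" 1 0] True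
    by (simp add: add.assoc)
  show ?thesis using t r1 r2 True by (simp add: power2_eq_square)
next
  case False
  then have F: "eps 1 2 = 1" using sigE(4)[OF S] by auto
  have t: "a (s+1+1,0,0) * a (s+1,0+1,0) - a (s+1,0,0) * a (s+1+1,0+1,0) = eps 1 2"
    by (rule tE12[OF T])
  have r1: "a (s+1,0+1,0) = a (s,0,0)" using rep[OF S T P, of "s+1" 1 0] F by simp
  have r2: "a (s+1+1,0+1,0) = a (s+1,0,0)" using rep[OF S T P, of "s+1+1" 1 0] F by (simp add: algebra_simps)
  have e: "s+1+1 = s+2" by simp
  show ?thesis using t r1 r2 F unfolding e by (simp add: power2_eq_square algebra_simps)
qed



lemma arith_min:
  fixes m u v :: int
  assumes "m > 0" "m \<le> u" "m \<le> v" "u*v = m^2 + 1"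
  shows "m = 1 \<and> (u = 1 \<or> v = 1)"
proof -
  have "u = m \<or> v = m"
  proof (rule ccontr)
    assume "\<not> (u = m \<or> v = m)"
    then have "u \<ge> m+1" "v \<ge> m+1" using assms by auto
    then have "u*v \<ge> (m+1)*(m+1)" using assms by (intro mult_mono) auto
    then show False using assms by (simp add: power2_eq_square algebra_simps)
  qed
  then show ?thesis
  proof
    assume "u = m"
    then have "m * (v - m) = 1" using assms by (simp add: power2_eq_square algebra_simps)
    then have "m = 1 \<and> v - m = 1" using assms pos_zmult_eq_1_iff by auto
    then show ?thesis using \<open>u = m\<close> by auto
  next
    assume "v = m"
    then have "m * (u - m) = 1" using assms by (simp add: power2_eq_square algebra_simps)
    then have "m = 1 \<and> u - m = 1" using assms pos_zmult_eq_1_iff by auto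
    then show ?thesis using \<open>v = m\<close> by auto
  qed
qed

lemma ones:
  fixes f :: "int \<Rightarrow> int"
  assumes pos: "\<And>s. f s > 0" and rec: "\<And>s. f s * f (s+2) = (f (s+1))^2 + 1"
  shows "\<exists>t. f t = 1 \<and> f (t+1) = 1"
proof -
  obtain s0 where sm: "\<And>s. f s0 \<le> f s" using exists_min[of f] pos by blast
  have r: "f (s0 - 1) * f (s0 + 1) = (f s0)^2 + 1" using rec[of "s0-1"] by (simp add: algebra_simps)
  have "f s0 = 1 \<and> (f (s0 - 1) = 1 \<or> f (s0+1) = 1)"
    using arith_min[OF pos sm sm r] .
  then show ?thesis by (metis diff_add_cancel)
qed

lemma rec_unique:
  fixes f g :: "int \<Rightarrow> int"
  assumes pf: "\<And>s. f s > 0" and rf: "\<And>s. f s * f (s+2) = (f (s+1))^2 + 1"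
    and rg: "\<And>s. g s * g (s+2) = (g (s+1))^2 + 1"
    and e0: "f t = g t" and e1: "f (t+1) = g (t+1)"
  shows "f s = g s"
proof -
  have up: "\<And>n::nat. f (t + int n) = g (t + int n) \<and> f (t + int n + 1) = g (t + int n + 1)"
  proof -
    fix n :: nat
    show "f (t + int n) = g (t + int n) \<and> f (t + int n + 1) = g (t + int n + 1)"
    proof (induct n)
      case 0 then show ?case using e0 e1 by simp
    next
      case (Suc n)
      let ?s = "t + int n"
      have a: "f ?s * f (?s+2) = f ?s * g (?s+2)"
        using rf[of ?s] rg[of ?s] Suc by simp
      have h2: "f (?s+2) = g (?s+2)" using a pf[of ?s] by simp
      have h1: "f (?s+1) = g (?s+1)" using Suc by simp
      have q: "t + int (Suc n) = ?s + 1" "t + int (Suc n) + 1 = ?s + 2" by simp_all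
      show ?case using h1 h2 q by metis
    qed
  qed
  have down: "\<And>n::nat. f (t - int n) = g (t - int n) \<and> f (t - int n + 1) = g (t - int n + 1)"
  proof -
    fix n :: nat
    show "f (t - int n) = g (t - int n) \<and> f (t - int n + 1) = g (t - int n + 1)"
    proof (induct n)
      case 0 then show ?case using e0 e1 by simp
    next
      case (Suc n)
      let ?s = "t - int n - 1"
      have q1: "?s + 1 = t - int n" "?s + 2 = t - int n + 1" by simp_all
      have a: "f ?s * f (?s+2) = g ?s * f (?s+2)"
        using rf[of ?s] rg[of ?s] Suc unfolding q1 by simp
      have "f ?s = g ?s" using a pf[of "?s+2"] by simp
      moreover have "?s = t - int (Suc n)" "?s + 1 = t - int (Suc n) + 1" by simp_all
      ultimately show ?case using Suc q1 by metis
    qed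
  qed
  show ?thesis
  proof (cases "s \<ge> t")
    case True
    then have "s = t + int (nat (s - t))" by simp
    then show ?thesis using up by metis
  next
    case False
    then have "s = t - int (nat (t - s))" by simp
    then show ?thesis using down by metis
  qed
qed

fun u :: "nat \<Rightarrow> int" where
  "u 0 = 1" | "u (Suc 0) = 1" | "u (Suc (Suc n)) = 3 * u (Suc n) - u n"

lemma u_mono: "1 \<le> u n \<and> u n \<le> u (Suc n)"
proof (induct n)
  case 0 then show ?case by simp
next
  case (Suc n)
  have "u (Suc (Suc n)) = 3 * u (Suc n) - u n" by simp
  then show ?case using Suc by linarith
qed

lemma u_Q: "(u (Suc n))^2 - 3 * u n * u (Suc n) + (u n)^2 = -1"
proof (induct n)
  case 0 then show ?case by simp
next
  case (Suc n)
  then show ?case by (simp add: power2_eq_square algebra_simps)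
qed

lemma u_rec: "u n * u (Suc (Suc n)) = (u (Suc n))^2 + 1"
  using u_Q[of n] by (simp add: power2_eq_square algebra_simps)

definition F :: "int \<Rightarrow> int" where
  "F s = u (nat (if s \<ge> 1 then s else 1 - s))"

lemma F_pos: "F s > 0"
  using u_mono unfolding F_def by (meson less_le_trans zero_less_one)

lemma u2: "u 2 = 2"
proof -
  have "u (Suc (Suc 0)) = 2" by simp
  moreover have "(2::nat) = Suc (Suc 0)" by simp
  ultimately show ?thesis by metis
qed

lemma Fvals: "F 0 = 1" "F 1 = 1" "F 2 = 2" "F (-1) = 2"
proof -
  have a: "nat 2 = 2" by simp
  show "F 0 = 1" "F 1 = 1" unfolding F_def by simp_all
  show "F 2 = 2" unfolding F_def using u2 a by simp
  show "F (-1) = 2" unfolding F_def using u2 a by simp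
qed

lemma F_rec: "F s * F (s+2) = (F (s+1))^2 + 1"
proof -
  consider "s \<ge> 1" | "s = 0" | "s = -1" | "s \<le> -2" by linarith
  then show ?thesis
  proof cases
    case 1
    define n where "n = nat s"
    have n: "nat (s+2) = Suc (Suc n)" "nat (s+1) = Suc n" using 1 n_def by auto
    have "F s = u n" "F (s+1) = u (Suc n)" "F (s+2) = u (Suc (Suc n))"
      unfolding F_def using 1 n n_def by auto
    then show ?thesis using u_rec[of n] by simp
  next
    case 2
    then show ?thesis using Fvals by simp
  next
    case 3
    then show ?thesis using Fvals by simp
  next
    case 4
    define n where "n = nat (-1 - s)"
    have n: "nat (1 - s) = Suc (Suc n)" "nat (-s) = Suc n" "nat (-1-s) = n" using 4 n_def by auto
    have "F s = u (Suc (Suc n))" "F (s+1) = u (Suc n)" unfolding F_def using 4 n by auto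
    moreover have "F (s+2) = u n"
    proof (cases "s = -2")
      case True then show ?thesis unfolding F_def n_def by simp
    next
      case False
      then have "\<not> s + 2 \<ge> 1" using 4 by simp
      then show ?thesis unfolding F_def using n by (simp add: algebra_simps)
    qed
    ultimately show ?thesis using u_rec[of n] by (simp add: mult.commute)
  qed
qed

lemma F_step:
  assumes "\<sigma> \<in> {1,-1}" "\<tau> \<in> {1,-1}" "A = s + \<sigma>" "B = s + \<tau>" "C = s + \<sigma> + \<tau>"
  shows "F A * F B - F s * F C = - \<sigma> * \<tau>"
proof -
  have r0: "F s * F (s+2) = F (s+1) * F (s+1) + 1" using F_rec[of s] by (simp add: power2_eq_square)
  have r1: "F (s-1) * F (s+1) = F s * F s + 1" using F_rec[of "s-1"] by (simp add: power2_eq_square add.commute)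
  have r2: "F (s-2) * F s = F (s-1) * F (s-1) + 1"
  proof -
    have "s - 2 + 2 = s" "s - 2 + 1 = s - 1" by simp_all
    then show ?thesis using F_rec[of "s-2"] by (simp add: power2_eq_square)
  qed
  consider "\<sigma> = 1" "\<tau> = 1" | "\<sigma> = 1" "\<tau> = -1" | "\<sigma> = -1" "\<tau> = 1" | "\<sigma> = -1" "\<tau> = -1"
    using assms(1,2) by auto
  then show ?thesis
  proof cases
    case 1
    then have "A = s+1" "B = s+1" "C = s+2" using assms by simp_all
    then show ?thesis using 1 r0 by simp
  next
    case 2
    then have "A = s+1" "B = s-1" "C = s" using assms by simp_all
    then show ?thesis using 2 r1 by (simp add: mult.commute)
  next
    case 3
    then have "A = s-1" "B = s+1" "C = s" using assms by simp_all
    then show ?thesis using 3 r1 by simp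
  next
    case 4
    then have "A = s-1" "B = s-1" "C = s-2" using assms by simp_all
    then show ?thesis using 4 r2 by (simp add: mult.commute)
  qed
qed



lemma E_tiling:
  assumes pos: "\<And>i. a i > 0"
  and E12: "\<And>x y z. a (x+1,y,z) * a (x,y+1,z) - a (x,y,z) * a (x+1,y+1,z) = eps 1 2"
  and E13: "\<And>x y z. a (x+1,y,z) * a (x,y,z+1) - a (x,y,z) * a (x+1,y,z+1) = eps 1 3"
  and E23: "\<And>x y z. a (x,y+1,z) * a (x,y,z+1) - a (x,y,z) * a (x,y+1,z+1) = eps 2 3"
  and sym: "eps 2 1 = eps 1 2" "eps 3 1 = eps 1 3" "eps 3 2 = eps 2 3"
  shows "sl2_tiling3 eps a"
  unfolding sl2_tiling3_def
proof (intro conjI allI ballI impI)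
  fix i show "a i > 0" by (rule pos)
next
  fix i :: pt3 and k l :: nat
  assume k: "k \<in> {1,2,3}" and l: "l \<in> {1,2,3}" and kl: "k \<noteq> l"
  obtain x y z where i: "i = (x,y,z)" by (cases i) auto
  from k l kl consider "k=1" "l=2" | "k=1" "l=3" | "k=2" "l=1" | "k=2" "l=3" | "k=3" "l=1" | "k=3" "l=2"
    by auto
  then show "a (padd i (unitv l)) * a (padd i (unitv k)) - a i * a (padd (padd i (unitv k)) (unitv l)) = eps k l"
  proof cases
    case 1 then show ?thesis using E12[of x y z] by (simp add: i padd_def unitv_def ac_simps)
  next
    case 2 then show ?thesis using E13[of x y z] by (simp add: i padd_def unitv_def ac_simps)
  next
    case 3 then show ?thesis using E12[of x y z] sym by (simp add: i padd_def unitv_def ac_simps)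
  next
    case 4 then show ?thesis using E23[of x y z] by (simp add: i padd_def unitv_def ac_simps)
  next
    case 5 then show ?thesis using E13[of x y z] sym by (simp add: i padd_def unitv_def ac_simps)
  next
    case 6 then show ?thesis using E23[of x y z] sym by (simp add: i padd_def unitv_def ac_simps)
  qed
qed

definition tilF :: "int \<Rightarrow> int \<Rightarrow> pt3 \<Rightarrow> int" where
  "tilF p q i = (case i of (x,y,z) \<Rightarrow> F (x - p*y - q*z))"

lemma exist:
  assumes S: "signature3 eps" and P: "eps 1 2 * eps 1 3 * eps 2 3 = -1"
  shows "sl2_tiling3 eps (tilF (eps 1 2) (eps 1 3))"
proof -
  let ?p = "eps 1 2" and ?q = "eps 1 3"
  have v: "?p \<in> {1,-1}" "?q \<in> {1,-1}" "eps 2 3 \<in> {1,-1}" using sigE[OF S] by auto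
  have v': "- ?p \<in> {1,-1}" "- ?q \<in> {1,-1}" using v by auto
  have e23: "eps 2 3 = - ?p * ?q" using v P by auto
  show ?thesis
  proof (rule E_tiling)
    fix i show "tilF ?p ?q i > 0" unfolding tilF_def using F_pos by (simp split: prod.splits)
  next
    fix x y z
    have "F (x+1 - ?p*y - ?q*z) * F (x - ?p*(y+1) - ?q*z) - F (x - ?p*y - ?q*z) * F (x+1 - ?p*(y+1) - ?q*z)
          = - 1 * (- ?p)"
      by (rule F_step[where s="x - ?p*y - ?q*z"]) (use v' in \<open>auto simp: algebra_simps\<close>)
    then show "tilF ?p ?q (x+1,y,z) * tilF ?p ?q (x,y+1,z) - tilF ?p ?q (x,y,z) * tilF ?p ?q (x+1,y+1,z) = ?p"
      unfolding tilF_def by simp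
  next
    fix x y z
    have "F (x+1 - ?p*y - ?q*z) * F (x - ?p*y - ?q*(z+1)) - F (x - ?p*y - ?q*z) * F (x+1 - ?p*y - ?q*(z+1))
          = - 1 * (- ?q)"
      by (rule F_step[where s="x - ?p*y - ?q*z"]) (use v' in \<open>auto simp: algebra_simps\<close>)
    then show "tilF ?p ?q (x+1,y,z) * tilF ?p ?q (x,y,z+1) - tilF ?p ?q (x,y,z) * tilF ?p ?q (x+1,y,z+1) = ?q"
      unfolding tilF_def by simp
  next
    fix x y z
    have "F (x - ?p*(y+1) - ?q*z) * F (x - ?p*y - ?q*(z+1)) - F (x - ?p*y - ?q*z) * F (x - ?p*(y+1) - ?q*(z+1))
          = - (- ?p) * (- ?q)"
      by (rule F_step[where s="x - ?p*y - ?q*z"]) (use v' in \<open>auto simp: algebra_simps\<close>)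
    then show "tilF ?p ?q (x,y+1,z) * tilF ?p ?q (x,y,z+1) - tilF ?p ?q (x,y,z) * tilF ?p ?q (x,y+1,z+1) = eps 2 3"
      unfolding tilF_def using e23 by simp
  qed (use sigE[OF S] in auto)
qed



definition mk :: "int \<Rightarrow> int \<Rightarrow> int \<Rightarrow> nat \<Rightarrow> nat \<Rightarrow> int" where
  "mk p q r k l = (if k \<in> {1,2,3} \<and> l \<in> {1,2,3} then
      (if k = l then -1 else if k + l = 3 then p else if k + l = 4 then q else r) else 0)"

lemma mk_vals: "mk p q r 1 2 = p" "mk p q r 1 3 = q" "mk p q r 2 3 = r"
  by (simp_all add: mk_def)

lemma mk_eq_iff[simp]: "mk p q r = mk p' q' r' \<longleftrightarrow> p = p' \<and> q = q' \<and> r = r'"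
  by (metis mk_vals)

lemma sig_mk:
  assumes "signature3 eps"
  shows "eps = mk (eps 1 2) (eps 1 3) (eps 2 3)"
proof (intro ext)
  fix k l :: nat
  have d: "\<forall>k \<in> {1,2,3}. eps k k = -1" and o: "\<forall>k l. k \<notin> {1,2,3} \<or> l \<notin> {1,2,3} \<longrightarrow> eps k l = 0"
    using assms unfolding signature3_def by auto
  have s: "eps 2 1 = eps 1 2" "eps 3 1 = eps 1 3" "eps 3 2 = eps 2 3" using sigE[OF assms] by auto
  show "eps k l = mk (eps 1 2) (eps 1 3) (eps 2 3) k l"
  proof (cases "k \<in> {1,2,3} \<and> l \<in> {1,2,3}")
    case True
    then consider "k=1" "l=1" | "k=1" "l=2" | "k=1" "l=3" | "k=2" "l=1" | "k=2" "l=2"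
      | "k=2" "l=3" | "k=3" "l=1" | "k=3" "l=2" | "k=3" "l=3" by auto
    then show ?thesis by cases (use d s in \<open>simp_all add: mk_def\<close>)
  next
    case False
    then show ?thesis using o unfolding mk_def by auto
  qed
qed

lemma mk_sig:
  assumes "p \<in> {1,-1}" "q \<in> {1,-1}" "r \<in> {1,-1}"
  shows "signature3 (mk p q r)"
  using assms unfolding signature3_def mk_def by auto

lemma iff_part:
  assumes S: "signature3 eps"
  shows "(\<exists>a. sl2_tiling3 eps a) \<longleftrightarrow> eps 1 2 * eps 1 3 * eps 2 3 = -1"
  using no_tiling[OF S] exist[OF S] by blast

lemma set_eq:
  "{eps. signature3 eps \<and> (\<exists>a. sl2_tiling3 eps a)}
     = {mk (-1) (-1) (-1), mk (-1) 1 1, mk 1 (-1) 1, mk 1 1 (-1)}"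
proof
  show "{eps. signature3 eps \<and> (\<exists>a. sl2_tiling3 eps a)}
     \<subseteq> {mk (-1) (-1) (-1), mk (-1) 1 1, mk 1 (-1) 1, mk 1 1 (-1)}"
  proof
    fix eps assume "eps \<in> {eps. signature3 eps \<and> (\<exists>a. sl2_tiling3 eps a)}"
    then have S: "signature3 eps" and P: "eps 1 2 * eps 1 3 * eps 2 3 = -1"
      using iff_part by auto
    have v: "eps 1 2 \<in> {1,-1}" "eps 1 3 \<in> {1,-1}" "eps 2 3 \<in> {1,-1}" using sigE[OF S] by auto
    have e: "eps = mk (eps 1 2) (eps 1 3) (eps 2 3)" by (rule sig_mk[OF S])
    show "eps \<in> {mk (-1) (-1) (-1), mk (-1) 1 1, mk 1 (-1) 1, mk 1 1 (-1)}"
      using v P by (subst e) auto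
  qed
next
  show "{mk (-1) (-1) (-1), mk (-1) 1 1, mk 1 (-1) 1, mk 1 1 (-1)}
     \<subseteq> {eps. signature3 eps \<and> (\<exists>a. sl2_tiling3 eps a)}"
  proof
    fix eps assume "eps \<in> {mk (-1) (-1) (-1), mk (-1) 1 1, mk 1 (-1) 1, mk 1 1 (-1)}"
    then obtain p q r where e: "eps = mk p q r" and v: "p \<in> {1,-1}" "q \<in> {1,-1}" "r \<in> {1,-1}"
      and P: "p * q * r = -1" by auto
    have S: "signature3 eps" using mk_sig[OF v] e by simp
    moreover have "eps 1 2 * eps 1 3 * eps 2 3 = -1" using P e mk_vals by simp
    ultimately show "eps \<in> {eps. signature3 eps \<and> (\<exists>a. sl2_tiling3 eps a)}"
      using iff_part by auto
  qed
qed

lemma card_part: "card {eps. signature3 eps \<and> (\<exists>a. sl2_tiling3 eps a)} = 4"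
  unfolding set_eq by simp

lemma uniq:
  assumes S: "signature3 eps" and Ta: "sl2_tiling3 eps a" and Tb: "sl2_tiling3 eps b"
  shows "\<exists>t. \<forall>i. b i = a (padd i t)"
proof -
  have P: "eps 1 2 * eps 1 3 * eps 2 3 = -1" by (rule no_tiling[OF S Ta])
  obtain ta where ta: "a (ta,0,0) = 1" "a (ta+1,0,0) = 1"
    using ones[of "\<lambda>s. a (s,0,0)"] tpos[OF Ta] line_rec[OF S Ta P] by blast
  obtain tb where tb: "b (tb,0,0) = 1" "b (tb+1,0,0) = 1"
    using ones[of "\<lambda>s. b (s,0,0)"] tpos[OF Tb] line_rec[OF S Tb P] by blast
  define c where "c = ta - tb"
  have hr: "a (s + c,0,0) * a (s + 2 + c,0,0) = (a (s + 1 + c,0,0))^2 + 1" for s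
  proof -
    have "s + c + 2 = s + 2 + c" "s + c + 1 = s + 1 + c" by simp_all
    then show ?thesis using line_rec[OF S Ta P, of "s + c"] by metis
  qed
  have bl: "b (s,0,0) = a (s + c,0,0)" for s
  proof (rule rec_unique[where f="\<lambda>s. b (s,0,0)" and g="\<lambda>s. a (s + c,0,0)" and t=tb])
    show "\<And>s. b (s,0,0) > 0" using tpos[OF Tb] by blast
    show "\<And>s. b (s,0,0) * b (s+2,0,0) = (b (s+1,0,0))^2 + 1" using line_rec[OF S Tb P] by blast
    show "\<And>s. a (s + c,0,0) * a (s + 2 + c,0,0) = (a (s + 1 + c,0,0))^2 + 1" by (rule hr)
    show "b (tb,0,0) = a (tb + c,0,0)" using ta tb c_def by simp
    have "tb + 1 + c = ta + 1" using c_def by simp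
    then show "b (tb+1,0,0) = a (tb + 1 + c,0,0)" using ta(2) tb(2) by metis
  qed
  show ?thesis
  proof (intro exI allI)
    fix i :: pt3
    obtain x y z where i: "i = (x,y,z)" by (cases i) auto
    have "b i = a (x - eps 1 2 * y - eps 1 3 * z + c, 0, 0)"
      using rep[OF S Tb P, of x y z] bl i by simp
    also have "\<dots> = a (x + c - eps 1 2 * y - eps 1 3 * z, 0, 0)" by (simp add: algebra_simps)
    also have "\<dots> = a (x + c, y, z)" using rep[OF S Ta P, of "x+c" y z] by simp
    also have "\<dots> = a (padd i (c,0,0))" by (simp add: i padd_def)
    finally show "b i = a (padd i (c,0,0))" .
  qed
qed

theorem corollary2p5:
  shows "(\<forall>eps. signature3 eps \<longrightarrow>
            ((\<exists>a. sl2_tiling3 eps a) \<longleftrightarrow> eps 1 2 * eps 1 3 * eps 2 3 = -1))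
       \<and> card {eps. signature3 eps \<and> (\<exists>a. sl2_tiling3 eps a)} = 4
       \<and> (\<forall>eps a b. signature3 eps \<longrightarrow> sl2_tiling3 eps a \<longrightarrow> sl2_tiling3 eps b \<longrightarrow>
            (\<exists>t. \<forall>i. b i = a (padd i t)))"
  using iff_part card_part uniq by blast


end
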